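(* Let $F=\{f_i\}_{i=1}^N$ be a tight frame for $\mathcal H$. Then the following are equivalent: (i) $(F,S_F^{-1}F)\in\mathcal F^{(1)}$; (ii) $(F,S_F^{-1}F)\in\mathcal R^{(1)}$; (iii) $(F,S_F^{-1}F)\in\mathcal N^{(1)}$.
   Context: $\mathcal H$ is a complex Hilbert space of finite dimension $n$, inner product linear in the first argument, $N\ge n$. A finite sequence $F=\{f_i\}_{i=1}^N$ is a frame if there are $0<A\le B$ with $A\|f\|^2\le\sum_i|\langle f,f_i\rangle|^2\le B\|f\|^2$ for all $f$; tight if one can take $A=B$. $S_Ff=\sum_i\langle f,f_i\rangle f_i$; $S_F^{-1}F=\{S_F^{-1}f_i\}$ is the canonical dual. $G=\{g_i\}_{i=1}^N$ is a dual of $F$ if $f=\sum_i\langle f,g_i\rangle f_i$ for all $f$; $(F,G)$ is then an $(N,n)$ dual pair. $E_{\Lambda,F,G}f=\sum_{i\in\Lambda}\langle f,f_i\rangle g_i$. For a measure $\mathcal M$ on operators, let $\mathcal M^{(1)}_{F,G}=\max_{1\le i\le N}\mathcal M(E_{\{i\},F,G})$ and call $(F,G)$ optimal for $\mathcal M$ if $\mathcal M^{(1)}_{F,G}$ equals the infimum of $\mathcal M^{(1)}_{F',G'}$ over all $(N,n)$ dual pairs $(F',G')$ for $\mathcal H$. $\mathcal F^{(1)}$, $\mathcal R^{(1)}$, $\mathcal N^{(1)}$ denote the sets of optimal pairs for, respectively, the Frobenius norm $\|T\|_{\mathcal F}=\sqrt{\operatorname{tr}(T^*T)}$, the spectral radius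 $\rho(T)$, and the numerical radius $\omega(T)=\sup\{|\langle Tf,f\rangle|:\|f\|=1\}$. *)

theory Defs
  imports "HOL-Analysis.Analysis"
begin

text \<open>The n-dimensional complex Hilbert space is modelled as complex^'n with n = CARD('n);
  inner product linear in the first argument. Sequences are indexed by {1..N}.\<close>

definition cinner :: "complex^'n \<Rightarrow> complex^'n \<Rightarrow> complex" where
  "cinner f g = (\<Sum>j\<in>UNIV. f $ j * cnj (g $ j))"

definition is_frame :: "nat \<Rightarrow> (nat \<Rightarrow> complex^'n) \<Rightarrow> bool" where
  "is_frame N F \<longleftrightarrow> (\<exists>A B. 0 < A \<and> A \<le> B \<and>
     (\<forall>f. A * (norm f)\<^sup>2 \<le> (\<Sum>i=1..N. (cmod (cinner f (F i)))\<^sup>2)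
        \<and> (\<Sum>i=1..N. (cmod (cinner f (F i)))\<^sup>2) \<le> B * (norm f)\<^sup>2))"

definition is_tight_frame :: "nat \<Rightarrow> (nat \<Rightarrow> complex^'n) \<Rightarrow> bool" where
  "is_tight_frame N F \<longleftrightarrow> (\<exists>A. 0 < A \<and>
     (\<forall>f. (\<Sum>i=1..N. (cmod (cinner f (F i)))\<^sup>2) = A * (norm f)\<^sup>2))"

definition frame_op :: "nat \<Rightarrow> (nat \<Rightarrow> complex^'n) \<Rightarrow> complex^'n \<Rightarrow> complex^'n" where
  "frame_op N F f = (\<Sum>i=1..N. cinner f (F i) *s F i)"

definition canonical_dual :: "nat \<Rightarrow> (nat \<Rightarrow> complex^'n) \<Rightarrow> nat \<Rightarrow> complex^'n" where
  "canonical_dual N F i = inv (frame_op N F) (F i)"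

definition is_dual :: "nat \<Rightarrow> (nat \<Rightarrow> complex^'n) \<Rightarrow> (nat \<Rightarrow> complex^'n) \<Rightarrow> bool" where
  "is_dual N F G \<longleftrightarrow> (\<forall>f. f = (\<Sum>i=1..N. cinner f (G i) *s F i))"

definition E_op :: "nat set \<Rightarrow> (nat \<Rightarrow> complex^'n) \<Rightarrow> (nat \<Rightarrow> complex^'n) \<Rightarrow> complex^'n \<Rightarrow> complex^'n" where
  "E_op \<Lambda> F G f = (\<Sum>i\<in>\<Lambda>. cinner f (F i) *s G i)"

type_synonym 'n measure_op = "(complex^'n \<Rightarrow> complex^'n) \<Rightarrow> real"

definition M1 :: "'n measure_op \<Rightarrow> nat \<Rightarrow> (nat \<Rightarrow> complex^'n) \<Rightarrow> (nat \<Rightarrow> complex^'n) \<Rightarrow> real" where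
  "M1 M N F G = Max ((\<lambda>i. M (E_op {i} F G)) ` {1..N})"

definition optimal :: "'n measure_op \<Rightarrow> nat \<Rightarrow> (nat \<Rightarrow> complex^'n) \<Rightarrow> (nat \<Rightarrow> complex^'n) \<Rightarrow> bool" where
  "optimal M N F G \<longleftrightarrow> is_dual N F G \<and>
     M1 M N F G = Inf {M1 M N F' G' | F' G'. is_dual N F' G'}"

text \<open>Frobenius norm: sqrt (tr (T* T)) = sqrt (sum over standard basis of |T e_j|^2).\<close>
definition frob_norm :: "'n::finite measure_op" where
  "frob_norm T = sqrt (\<Sum>j\<in>UNIV. (norm (T (axis j 1)))\<^sup>2)"

definition spectral_radius :: "'n::finite measure_op" where
  "spectral_radius T = Sup {cmod l | l. \<exists>x. x \<noteq> 0 \<and> T x = l *s x}"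

definition numerical_radius :: "'n::finite measure_op" where
  "numerical_radius T = Sup {cmod (cinner (T f) f) | f. norm f = 1}"

end

theory Submission
  imports Defs
begin


lemma cinner_add_left: "cinner (x + y) z = cinner x z + cinner y z"
  by (simp add: cinner_def sum.distrib ring_distribs)
lemma cinner_scale_left: "cinner (c *s x) z = c * cinner x z"
  by (simp add: cinner_def sum_distrib_left mult.assoc)
lemma cinner_scale_right: "cinner x (c *s z) = cnj c * cinner x z"
  by (simp add: cinner_def sum_distrib_left mult_ac)
lemma cinner_sum_left: "cinner (\<Sum>i\<in>I. u i) z = (\<Sum>i\<in>I. cinner (u i) z)"
  unfolding cinner_def sum_component sum_distrib_right by (rule sum.swap)
lemma cinner_commute: "cinner y x = cnj (cinner x y)"
  by (simp add: cinner_def mult.commute)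
lemma cinner_zero_left[simp]: "cinner 0 x = 0" by (simp add: cinner_def)
lemma cinner_zero_right[simp]: "cinner x 0 = 0" by (simp add: cinner_def)
lemma norm_sq_vec: "(norm (x::complex^'n))^2 = (\<Sum>j\<in>UNIV. (cmod (x$j))^2)"
  by (simp add: norm_vec_def L2_set_def sum_nonneg)
lemma cinner_self: "cinner x x = of_real ((norm x)^2)"
  unfolding norm_sq_vec cinner_def of_real_sum
  by (rule sum.cong) (simp_all add: complex_norm_square[symmetric])
lemma cinner_axis: "cinner (axis j 1) f = cnj (f $ j)"
proof -
  have "cinner (axis j 1) f = (\<Sum>k\<in>UNIV. if k = j then cnj (f$k) else 0)"
    unfolding cinner_def by (rule sum.cong) (auto simp: axis_def)
  then show ?thesis by simp
qed

lemma cinner_CS: "cmod (cinner a b) \<le> norm a * norm b"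
proof -
  have "cmod (cinner a b) \<le> (\<Sum>j\<in>UNIV. cmod (a$j) * cmod (b$j))"
    unfolding cinner_def by (rule order_trans[OF norm_sum]) (simp add: norm_mult)
  also have "\<dots> \<le> L2_set (\<lambda>j. cmod (a$j)) UNIV * L2_set (\<lambda>j. cmod (b$j)) UNIV"
    using L2_set_mult_ineq[of "\<lambda>j. cmod (a$j)" "\<lambda>j. cmod (b$j)" UNIV] by simp
  finally show ?thesis by (simp add: norm_vec_def)
qed

lemma norm_smult_vec: "norm (c *s (v::complex^'n)) = cmod c * norm v"
proof -
  have "(norm (c *s v))^2 = (cmod c * norm v)^2"
    unfolding norm_sq_vec power_mult_distrib sum_distrib_left
    by (simp add: norm_mult power_mult_distrib)
  then show ?thesis by (simp add: power2_eq_iff_nonneg)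
qed

lemma frob_rank1: "frob_norm (\<lambda>x. cinner x f *s g) = norm f * norm g"
proof -
  have "(\<Sum>j\<in>UNIV. (norm (cinner (axis j 1) f *s g))\<^sup>2) = (norm f * norm g)^2"
    unfolding norm_smult_vec cinner_axis power_mult_distrib norm_sq_vec[of f] sum_distrib_right
    by simp
  then show ?thesis unfolding frob_norm_def by simp
qed

lemma norm_axis_c: "norm (axis m (1::complex) :: complex^'n) = 1"
proof -
  have "(norm (axis m (1::complex) :: complex^'n))^2 = (\<Sum>j\<in>UNIV. if j = m then 1 else 0)"
    unfolding norm_sq_vec by (rule sum.cong) (auto simp: axis_def)
  then show ?thesis by (simp add: power2_eq_iff_nonneg)
qed

lemma vec_nonzero_ex: "\<exists>x::complex^'n. norm x = 1"
  by (rule exI[of _ "axis undefined 1"]) (simp add: norm_axis_c)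

lemma num_rank1_upper: "numerical_radius (\<lambda>x. cinner x f *s g) \<le> norm f * norm g"
  unfolding numerical_radius_def
proof (rule cSup_least)
  show "{cmod (cinner (cinner u f *s g) u) |u. norm u = 1} \<noteq> {}" using vec_nonzero_ex by auto
next
  fix y assume "y \<in> {cmod (cinner (cinner u f *s g) u) |u. norm u = 1}"
  then obtain u where u: "norm u = 1" "y = cmod (cinner (cinner u f *s g) u)" by auto
  have "y = cmod (cinner u f) * cmod (cinner g u)" using u by (simp add: cinner_scale_left norm_mult)
  also have "\<dots> \<le> (norm u * norm f) * (norm g * norm u)"
    by (intro mult_mono cinner_CS) auto
  finally show "y \<le> norm f * norm g" using u by simp
qed

lemma num_rank1_lower: "cmod (cinner g f) \<le> numerical_radius (\<lambda>x. cinner x f *s g)"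
proof -
  let ?S = "{cmod (cinner (cinner u f *s g) u) |u. norm u = 1}"
  have bdd: "bdd_above ?S"
  proof (rule bdd_aboveI)
    fix y assume "y \<in> ?S"
    then obtain u where u: "norm u = 1" "y = cmod (cinner (cinner u f *s g) u)" by auto
    have "y = cmod (cinner u f) * cmod (cinner g u)" using u by (simp add: cinner_scale_left norm_mult)
    also have "\<dots> \<le> (norm u * norm f) * (norm g * norm u)"
      by (intro mult_mono cinner_CS) auto
    finally show "y \<le> norm f * norm g" using u by simp
  qed
  show ?thesis
  proof (cases "f = 0")
    case True
    obtain u :: "complex^'a" where "norm u = 1" using vec_nonzero_ex by blast
    then have "cmod (cinner (cinner u f *s g) u) \<in> ?S" by auto
    then show ?thesis using True bdd unfolding numerical_radius_def
      by (intro cSup_upper2) auto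
  next
    case False
    define u where "u = complex_of_real (1 / norm f) *s f"
    have nu: "norm u = 1" using False by (simp add: u_def norm_smult_vec norm_divide)
    have "cinner u f = of_real (norm f)"
      using False by (simp add: u_def cinner_scale_left cinner_self power2_eq_square)
    moreover have "cinner g u = cinner g f / of_real (norm f)"
      by (simp add: u_def cinner_scale_right divide_inverse mult.commute)
    ultimately have "cinner (cinner u f *s g) u = cinner g f"
      using False by (simp add: cinner_scale_left)
    then have "cmod (cinner g f) \<in> ?S" using nu by (metis (mono_tags, lifting) mem_Collect_eq)
    then show ?thesis using bdd unfolding numerical_radius_def by (rule cSup_upper)
  qed
qed

lemma smult_cancel_vec:
  assumes "a *s (g::complex^'n) = b *s g" "g \<noteq> 0" shows "a = b"
proof -
  obtain j where "g $ j \<noteq> 0" using assms(2) by (metis vec_eq_iff zero_index)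
  moreover have "a * g$j = b * g$j" using assms(1) by (metis vector_smult_component)
  ultimately show ?thesis by simp
qed

lemma spec_rank1:
  assumes lam: "cinner g f \<noteq> 0"
  shows "spectral_radius (\<lambda>x. cinner x f *s g) = cmod (cinner g f)"
  unfolding spectral_radius_def
proof (rule cSup_eq_maximum)
  have g0: "g \<noteq> 0" using lam by auto
  show "cmod (cinner g f) \<in> {cmod l |l. \<exists>x. x \<noteq> 0 \<and> cinner x f *s g = l *s x}"
    using g0 by blast
  fix y assume "y \<in> {cmod l |l. \<exists>x. x \<noteq> 0 \<and> cinner x f *s g = l *s x}"
  then obtain l x where y: "y = cmod l" and x0: "x \<noteq> 0" and ev: "cinner x f *s g = l *s x" by auto
  show "y \<le> cmod (cinner g f)"
  proof (cases "l = 0")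
    case True then show ?thesis using y by simp
  next
    case False
    define c where "c = cinner x f / l"
    have xc: "x = c *s g"
    proof -
      have "x = (1/l) *s (l *s x)" using False by (simp add: vector_smult_assoc)
      also have "\<dots> = c *s g" unfolding ev[symmetric] by (simp add: vector_smult_assoc c_def)
      finally show ?thesis .
    qed
    have c0: "c \<noteq> 0" using x0 xc by auto
    have "(c * cinner g f) *s g = (l * c) *s g"
    proof -
      have "(c * cinner g f) *s g = cinner x f *s g" using xc by (simp add: cinner_scale_left)
      also have "\<dots> = l *s x" by (rule ev)
      also have "\<dots> = (l * c) *s g" using xc by (simp add: vector_smult_assoc)
      finally show ?thesis .
    qed
    then have "c * cinner g f = l * c" using g0 by (rule smult_cancel_vec)
    then have "l = cinner g f" using c0 by (simp add: mult.commute)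
    then show ?thesis using y by simp
  qed
qed

lemma spec_rank1_zero:
  assumes "f = 0"
  shows "spectral_radius (\<lambda>x. cinner x f *s (g::complex^'n)) = 0"
  unfolding spectral_radius_def
proof (rule cSup_eq_maximum)
  obtain u :: "complex^'n" where u: "norm u = 1" using vec_nonzero_ex by blast
  then have "u \<noteq> 0" by auto
  then show "0 \<in> {cmod l |l. \<exists>x. x \<noteq> 0 \<and> cinner x f *s g = l *s x}"
    using assms by (intro CollectI exI[of _ 0]) auto
  fix y assume "y \<in> {cmod l |l. \<exists>x. x \<noteq> 0 \<and> cinner x f *s g = l *s x}"
  then obtain l x where y: "y = cmod l" and x0: "x \<noteq> 0" and ev: "cinner x f *s g = l *s x" by auto
  then have "l *s x = 0" using assms by simp
  then have "l = 0" using x0 smult_cancel_vec[of l x 0] by simp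
  then show "y \<le> 0" using y by simp
qed

definition omg :: "nat \<Rightarrow> complex" where
  "omg N = exp (2 * of_real pi * \<i> / of_nat N)"

lemma omg_pow: "omg N ^ p = exp (2 * of_real pi * \<i> * of_nat p / of_nat N)"
  unfolding omg_def exp_of_nat_mult[symmetric] by (simp add: field_simps)

lemma norm_omg_pow[simp]: "cmod (omg N ^ p) = 1"
  by (simp add: omg_pow)

lemma omg_pow_N: "1 \<le> N \<Longrightarrow> omg N ^ N = 1"
  by (simp add: omg_pow)

lemma omg_pow_inj: "1 \<le> N \<Longrightarrow> p < N \<Longrightarrow> q < N \<Longrightarrow> omg N ^ p = omg N ^ q \<longleftrightarrow> p = q"
  unfolding omg_pow by (simp add: complex_root_unity_eq)

lemma cnj_mult_self_unit: "cmod z = 1 \<Longrightarrow> cnj z * z = 1"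
  by (metis complex_norm_square mult.commute of_real_1 power_one)

lemma omg_orth:
  assumes N: "1 \<le> N" and p: "p < N" and q: "q < N"
  shows "(\<Sum>k=1..N. omg N ^ (k * p) * cnj (omg N ^ (k * q))) = (if p = q then of_nat N else 0)"
proof -
  define w where "w = omg N ^ p * cnj (omg N ^ q)"
  have eq: "omg N ^ (k * p) * cnj (omg N ^ (k * q)) = w ^ k" for k
    by (simp add: w_def power_mult[symmetric] power_mult_distrib mult.commute)
  have w1: "w = 1 \<longleftrightarrow> p = q"
  proof
    assume "w = 1"
    have "omg N ^ q = w * omg N ^ q" using \<open>w = 1\<close> by simp
    also have "\<dots> = omg N ^ p * (cnj (omg N ^ q) * omg N ^ q)" by (simp only: w_def mult.assoc)
    also have "\<dots> = omg N ^ p" by (simp only: cnj_mult_self_unit[OF norm_omg_pow] mult_1_right)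
    finally have "omg N ^ p = omg N ^ q" by simp
    then show "p = q" using omg_pow_inj[OF N p q] by simp
  next
    assume "p = q" then show "w = 1"
      unfolding w_def using cnj_mult_self_unit[OF norm_omg_pow, of N q] by (simp only: mult.commute)
  qed
  have a: "(omg N ^ r)^N = 1" for r by (metis power_mult mult.commute omg_pow_N[OF N] power_one)
  have wN: "w ^ N = 1"
    unfolding w_def power_mult_distrib a complex_cnj_power[symmetric] by simp
  show ?thesis
  proof (cases "p = q")
    case True then show ?thesis unfolding eq using w1 by simp
  next
    case False
    have "(1 - w) * (\<Sum>k=1..N. w ^ k) = w ^ 1 - w ^ Suc N" using N by (rule sum_gp_multiplied)
    also have "\<dots> = 0" using wN by simp
    finally have "(\<Sum>k=1..N. w ^ k) = 0" using w1 False by simp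
    then show ?thesis using False unfolding eq by simp
  qed
qed



definition hfr :: "nat \<Rightarrow> ('n \<Rightarrow> nat) \<Rightarrow> nat \<Rightarrow> complex^'n" where
  "hfr N idx k = (\<chi> j. omg N ^ (k * idx j) / of_real (sqrt (real N)))"

lemma hfr_prod:
  assumes N: "1 \<le> N" and inj: "inj idx" and lt: "\<And>j. idx j < N"
  shows "(\<Sum>k=1..N. hfr N idx k $ j * cnj (hfr N idx k $ l)) = (if l = j then 1 else 0)"
proof -
  have "(\<Sum>k=1..N. hfr N idx k $ j * cnj (hfr N idx k $ l))
      = (\<Sum>k=1..N. omg N ^ (k * idx j) * cnj (omg N ^ (k * idx l))) / of_nat N"
    unfolding sum_divide_distrib
  proof (rule sum.cong)
    fix k
    define r :: complex where "r = of_real (sqrt (real N))"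
    have s2: "sqrt (real N) * sqrt (real N) = real N" by simp
    have rr: "r * r = of_nat N" unfolding r_def of_real_mult[symmetric] s2 by simp
    have c: "cnj r = r" unfolding r_def by simp
    have "hfr N idx k $ j * cnj (hfr N idx k $ l) = (omg N ^ (k * idx j) / r) * (cnj (omg N ^ (k * idx l)) / cnj r)"
      unfolding hfr_def r_def by (simp only: vec_lambda_beta complex_cnj_divide)
    also have "\<dots> = omg N ^ (k * idx j) * cnj (omg N ^ (k * idx l)) / (r * r)"
      unfolding c by (simp only: times_divide_times_eq)
    finally show "hfr N idx k $ j * cnj (hfr N idx k $ l) =
         omg N ^ (k * idx j) * cnj (omg N ^ (k * idx l)) / of_nat N" unfolding rr .
  qed simp
  also have "\<dots> = (if l = j then 1 else 0)"
  proof (cases "l = j")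
    case True
    then show ?thesis using omg_orth[OF N lt lt, of j l] N by simp
  next
    case False
    then have "idx j \<noteq> idx l" using inj by (metis injD)
    then show ?thesis using omg_orth[OF N lt lt, of j l] False by simp
  qed
  finally show ?thesis .
qed

lemma hfr_dual:
  fixes idx :: "'n::finite \<Rightarrow> nat"
  assumes N: "1 \<le> N" and inj: "inj idx" and lt: "\<And>j. idx j < N"
  shows "is_dual N (hfr N idx) (hfr N idx)"
  unfolding is_dual_def
proof (intro allI)
  fix x :: "complex^'n"
  let ?h = "hfr N idx"
  show "x = (\<Sum>i=1..N. cinner x (?h i) *s ?h i)"
  proof (subst vec_eq_iff, intro allI)
    fix j
    have "(\<Sum>i=1..N. cinner x (?h i) *s ?h i) $ j = (\<Sum>i=1..N. \<Sum>l\<in>UNIV. x$l * (?h i $ j * cnj (?h i $ l)))"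
      by (simp add: sum_component cinner_def sum_distrib_left mult_ac)
    also have "\<dots> = (\<Sum>l\<in>UNIV. x$l * (\<Sum>i=1..N. ?h i $ j * cnj (?h i $ l)))"
      by (subst sum.swap) (simp add: sum_distrib_left)
    also have "\<dots> = (\<Sum>l\<in>UNIV. x$l * (if l = j then 1 else 0))"
      by (simp only: hfr_prod[OF N inj lt])
    also have "\<dots> = x$j" by (simp add: if_distrib cong: if_cong)
    finally show "x $ j = (\<Sum>i=1..N. cinner x (?h i) *s ?h i) $ j" by simp
  qed
qed

lemma hfr_norm:
  assumes N: "1 \<le> N"
  shows "(norm (hfr N idx k :: complex^'n))^2 = real CARD('n) / real N"
proof -
  have "(norm (hfr N idx k :: complex^'n))^2 = (\<Sum>j\<in>(UNIV::'n set). 1 / real N)"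
    unfolding norm_sq_vec
  proof (rule sum.cong)
    fix j
    show "(cmod (hfr N idx k $ j))\<^sup>2 = 1 / real N"
      by (simp add: hfr_def norm_divide power_divide)
  qed simp
  then show ?thesis by simp
qed




lemma E_op_single: "E_op {i} F G = (\<lambda>x. cinner x (F i) *s G i)"
  by (rule ext) (simp add: E_op_def)

lemma dual_trace:
  fixes F G :: "nat \<Rightarrow> complex^'n"
  assumes "is_dual N F G"
  shows "(\<Sum>i=1..N. cinner (F i) (G i)) = of_nat CARD('n)"
proof -
  have one: "(\<Sum>i=1..N. F i $ j * cnj (G i $ j)) = 1" for j
  proof -
    have "axis j 1 = (\<Sum>i=1..N. cinner (axis j 1) (G i) *s F i)" using assms unfolding is_dual_def by blast
    then have "(axis j 1 :: complex^'n) $ j = (\<Sum>i=1..N. cinner (axis j 1) (G i) *s F i) $ j" by simp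
    then show ?thesis by (simp add: sum_component cinner_axis mult.commute)
  qed
  have "(\<Sum>i=1..N. cinner (F i) (G i)) = (\<Sum>j\<in>UNIV. \<Sum>i=1..N. F i $ j * cnj (G i $ j))"
    unfolding cinner_def by (rule sum.swap)
  also have "\<dots> = (\<Sum>j\<in>(UNIV::'n set). 1)" using one by simp
  finally show ?thesis by simp
qed

lemma M1_lower:
  fixes F G :: "nat \<Rightarrow> complex^'n" and M :: "'n measure_op"
  assumes N: "1 \<le> N" and d: "is_dual N F G"
    and low: "\<And>f g::complex^'n. cinner g f \<noteq> 0 \<Longrightarrow> cmod (cinner g f) \<le> M (\<lambda>x. cinner x f *s g)"
  shows "real CARD('n) / real N \<le> M1 M N F G"
proof -
  let ?c = "real CARD('n) / real N"
  have "real CARD('n) = cmod (\<Sum>i=1..N. cinner (F i) (G i))" using dual_trace[OF d] by simp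
  also have "\<dots> \<le> (\<Sum>i=1..N. cmod (cinner (F i) (G i)))" by (rule norm_sum)
  finally have tr: "real CARD('n) \<le> (\<Sum>i=1..N. cmod (cinner (F i) (G i)))" .
  have "\<exists>i\<in>{1..N}. ?c \<le> cmod (cinner (F i) (G i))"
  proof (rule ccontr)
    assume "\<not> ?thesis"
    then have "\<And>i. i \<in> {1..N} \<Longrightarrow> cmod (cinner (F i) (G i)) < ?c" by (simp add: not_le)
    then have "(\<Sum>i=1..N. cmod (cinner (F i) (G i))) < (\<Sum>i=1..N. ?c)"
      using N by (intro sum_strict_mono) auto
    also have "\<dots> = real CARD('n)" using N by simp
    finally show False using tr by simp
  qed
  then obtain i where i: "i \<in> {1..N}" "?c \<le> cmod (cinner (F i) (G i))" by blast
  have pos: "0 < ?c" using N by simp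
  have eq: "cmod (cinner (G i) (F i)) = cmod (cinner (F i) (G i))"
    by (subst cinner_commute) (rule complex_mod_cnj)
  have nz: "cinner (G i) (F i) \<noteq> 0"
  proof
    assume "cinner (G i) (F i) = 0"
    then have "?c \<le> 0" using i(2) eq by simp
    then show False using pos by linarith
  qed
  have "?c \<le> cmod (cinner (G i) (F i))" using i eq by simp
  also have "\<dots> \<le> M (E_op {i} F G)" unfolding E_op_single by (rule low[OF nz])
  also have "\<dots> \<le> M1 M N F G" unfolding M1_def by (rule Max_ge) (use i in auto)
  finally show ?thesis .
qed

lemma Inf_val:
  fixes M :: "'n::finite measure_op"
  assumes N: "CARD('n) \<le> N"
    and low: "\<And>f g::complex^'n. cinner g f \<noteq> 0 \<Longrightarrow> cmod (cinner g f) \<le> M (\<lambda>x. cinner x f *s g)"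
    and up: "\<And>h::complex^'n. h \<noteq> 0 \<Longrightarrow> M (\<lambda>x. cinner x h *s h) \<le> (norm h)^2"
  shows "Inf {M1 M N F' G' | F' G'. is_dual N F' G'} = real CARD('n) / real N"
proof (rule cInf_eq_minimum)
  have "0 < CARD('n)" by simp
  then have N1: "1 \<le> N" using N by linarith
  have "\<exists>h. bij_betw h (UNIV::'n set) {0..<card (UNIV::'n set)}"
    by (rule ex_bij_betw_finite_nat) simp
  then obtain idx where bij: "bij_betw idx (UNIV::'n set) {0..<card (UNIV::'n set)}"
    by (elim exE)
  have inj: "inj idx" using bij by (rule bij_betw_imp_inj_on)
  have lt: "idx j < N" for j
  proof -
    have "idx j \<in> {0..<card (UNIV::'n set)}" using bij_betwE[OF bij] by blast
    then show ?thesis using N by simp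
  qed
  let ?h = "hfr N idx :: nat \<Rightarrow> complex^'n"
  have d: "is_dual N ?h ?h" by (rule hfr_dual[OF N1 inj lt])
  have "M1 M N ?h ?h \<le> real CARD('n) / real N"
    unfolding M1_def
  proof (rule Max.boundedI)
    show "(\<lambda>i. M (E_op {i} ?h ?h)) ` {1..N} \<noteq> {}" using N1 by auto
  next
    fix y assume "y \<in> (\<lambda>i. M (E_op {i} ?h ?h)) ` {1..N}"
    then obtain k where y: "y = M (E_op {k} ?h ?h)" by auto
    have "(norm (?h k))^2 = real CARD('n) / real N" by (rule hfr_norm[OF N1])
    moreover have "?h k \<noteq> 0"
    proof
      assume "?h k = 0"
      with calculation have "real CARD('n) / real N = 0" by simp
      then show False using N1 by simp
    qed
    ultimately show "y \<le> real CARD('n) / real N" unfolding y E_op_single using up[of "?h k"] by simp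
  next
    show "finite ((\<lambda>i. M (E_op {i} ?h ?h)) ` {1..N})" by simp
  qed
  moreover have "real CARD('n) / real N \<le> M1 M N ?h ?h" by (rule M1_lower[OF N1 d low])
  ultimately have eqc: "real CARD('n) / real N = M1 M N ?h ?h" by (rule antisym[rotated])
  show "real CARD('n) / real N \<in> {M1 M N F' G' | F' G'. is_dual N F' G'}"
    by (intro CollectI exI conjI) (rule eqc, rule d)
  fix x assume "x \<in> {M1 M N F' G' | F' G'. is_dual N F' G'}"
  then obtain F' G' where x: "x = M1 M N F' G'" and dd: "is_dual N F' G'" by blast
  show "real CARD('n) / real N \<le> x" unfolding x by (rule M1_lower[OF N1 dd low])
qed




lemma cinner_add_right: "cinner x (y + z) = cinner x y + cinner x z"
  by (simp add: cinner_def sum.distrib ring_distribs)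

lemma frame_op_add: "frame_op N F (x + y) = frame_op N F x + frame_op N F y"
  by (simp add: vec_eq_iff frame_op_def sum_component cinner_add_left ring_distribs sum.distrib)

lemma frame_op_scale: "frame_op N F (c *s x) = c *s frame_op N F x"
  by (simp add: vec_eq_iff frame_op_def sum_component cinner_scale_left sum_distrib_left mult_ac)

lemma frame_op_quad: "cinner (frame_op N F x) x = of_real (\<Sum>i=1..N. (cmod (cinner x (F i)))\<^sup>2)"
proof -
  have "cinner (frame_op N F x) x = (\<Sum>i=1..N. cinner x (F i) * cinner (F i) x)"
    unfolding frame_op_def cinner_sum_left cinner_scale_left ..
  also have "\<dots> = (\<Sum>i=1..N. of_real ((cmod (cinner x (F i)))\<^sup>2))"
  proof (rule sum.cong)
    fix i show "cinner x (F i) * cinner (F i) x = of_real ((cmod (cinner x (F i)))\<^sup>2)"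
      by (subst cinner_commute[of "F i"]) (simp add: complex_norm_square[symmetric])
  qed simp
  finally show ?thesis by simp
qed

lemma polarization_zero:
  fixes D :: "complex^'n \<Rightarrow> complex^'n"
  assumes add: "\<And>x y. D (x + y) = D x + D y" and sc: "\<And>c x. D (c *s x) = c *s D x"
    and q: "\<And>x. cinner (D x) x = 0"
  shows "D x = 0"
proof -
  have p1: "cinner (D x) y + cinner (D y) x = 0" for x y
  proof -
    have "0 = cinner (D (x + y)) (x + y)" using q by simp
    also have "\<dots> = cinner (D x) x + cinner (D x) y + cinner (D y) x + cinner (D y) y"
      by (simp add: add cinner_add_left cinner_add_right)
    finally show ?thesis using q by simp
  qed
  have p2: "cinner (D x) y = cinner (D y) x" for x y
  proof -
    have "cinner (D x) (\<i> *s y) + cinner (D (\<i> *s y)) x = 0" by (rule p1)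
    then have "- \<i> * cinner (D x) y + \<i> * cinner (D y) x = 0"
      by (simp add: sc cinner_scale_left cinner_scale_right)
    then have "\<i> * (cinner (D y) x - cinner (D x) y) = 0" by (simp add: algebra_simps)
    then show ?thesis by simp
  qed
  have "cinner (D x) (D x) = 0" using p1[of x "D x"] p2[of x "D x"] by simp
  then have "(norm (D x))^2 = 0" unfolding cinner_self by simp
  then show ?thesis by simp
qed

lemma tight_frame_op:
  fixes F :: "nat \<Rightarrow> complex^'n"
  assumes A: "\<And>f. (\<Sum>i=1..N. (cmod (cinner f (F i)))\<^sup>2) = A * (norm f)\<^sup>2"
  shows "frame_op N F x = complex_of_real A *s x"
proof -
  define D where "D x = frame_op N F x - complex_of_real A *s x" for x
  have "D x = 0"
  proof (rule polarization_zero[where D=D])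
    show "D (x + y) = D x + D y" for x y
      by (simp add: D_def frame_op_add vector_add_ldistrib algebra_simps)
    show "D (c *s x) = c *s D x" for c x
      by (simp add: D_def frame_op_scale vec_eq_iff algebra_simps)
    show "cinner (D x) x = 0" for x
    proof -
      have "cinner (D x) x = cinner (frame_op N F x) x - cinner (complex_of_real A *s x) x"
        unfolding D_def cinner_def by (simp add: sum_subtractf ring_distribs)
      also have "\<dots> = 0" unfolding frame_op_quad A cinner_scale_left cinner_self by simp
      finally show ?thesis .
    qed
  qed
  then show ?thesis unfolding D_def by simp
qed

lemma canonical_dual_tight:
  fixes F :: "nat \<Rightarrow> complex^'n"
  assumes A: "\<And>f. (\<Sum>i=1..N. (cmod (cinner f (F i)))\<^sup>2) = A * (norm f)\<^sup>2" and A0: "0 < A"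
  shows "canonical_dual N F i = complex_of_real (1 / A) *s F i"
proof -
  have fo: "frame_op N F = (\<lambda>x. complex_of_real A *s x)" using tight_frame_op[OF A] by (rule ext)
  have inj: "inj (\<lambda>x::complex^'n. complex_of_real A *s x)"
  proof (rule injI)
    fix x y :: "complex^'n" assume "complex_of_real A *s x = complex_of_real A *s y"
    then have "complex_of_real (1/A) *s (complex_of_real A *s x) = complex_of_real (1/A) *s (complex_of_real A *s y)" by (simp only:)
    then have "(complex_of_real (1/A) * complex_of_real A) *s x = (complex_of_real (1/A) * complex_of_real A) *s y"
      by (simp only: vector_smult_assoc)
    moreover have "complex_of_real (1/A) * complex_of_real A = 1" using A0 by (simp flip: of_real_mult)
    ultimately show "x = y" by simp
  qed
  show ?thesis unfolding canonical_dual_def fo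
    by (rule inv_f_eq[OF inj]) (use A0 in \<open>simp add: vector_smult_assoc\<close>)
qed

lemma canonical_is_dual:
  fixes F :: "nat \<Rightarrow> complex^'n"
  assumes A: "\<And>f. (\<Sum>i=1..N. (cmod (cinner f (F i)))\<^sup>2) = A * (norm f)\<^sup>2" and A0: "0 < A"
  shows "is_dual N F (canonical_dual N F)"
  unfolding is_dual_def
proof
  fix f :: "complex^'n"
  have "(\<Sum>i=1..N. cinner f (canonical_dual N F i) *s F i) = complex_of_real (1/A) *s frame_op N F f"
    unfolding canonical_dual_tight[OF A A0] frame_op_def
    by (simp add: vec_eq_iff sum_component cinner_scale_right sum_distrib_left mult_ac)
  also have "\<dots> = f" unfolding tight_frame_op[OF A] using A0 by (simp add: vector_smult_assoc)
  finally show "f = (\<Sum>i=1..N. cinner f (canonical_dual N F i) *s F i)" by simp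
qed




lemma pair_vals:
  fixes f :: "complex^'n"
  assumes A0: "0 < A"
  shows "frob_norm (\<lambda>x. cinner x f *s (complex_of_real (1/A) *s f)) = (norm f)^2 / A"
    and "spectral_radius (\<lambda>x. cinner x f *s (complex_of_real (1/A) *s f)) = (norm f)^2 / A"
    and "numerical_radius (\<lambda>x. cinner x f *s (complex_of_real (1/A) *s f)) = (norm f)^2 / A"
proof -
  let ?g = "complex_of_real (1/A) *s f"
  have ng: "norm ?g = norm f / A" using A0 by (simp add: norm_smult_vec norm_divide)
  have ip: "cinner ?g f = complex_of_real ((norm f)^2 / A)"
    by (simp add: cinner_scale_left cinner_self)
  have fg: "norm f * norm ?g = (norm f)^2 / A" unfolding ng by (simp add: power2_eq_square)
  show "frob_norm (\<lambda>x. cinner x f *s ?g) = (norm f)^2 / A" unfolding frob_rank1 fg ..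
  show "spectral_radius (\<lambda>x. cinner x f *s ?g) = (norm f)^2 / A"
  proof (cases "f = 0")
    case True then show ?thesis using spec_rank1_zero[OF True, of ?g] by simp
  next
    case False
    then have "(norm f)^2 / A > 0" using A0 by simp
    then have nz: "cinner ?g f \<noteq> 0" using A0 False unfolding ip by simp
    show ?thesis unfolding spec_rank1[OF nz] ip norm_of_real using A0 by simp
  qed
  have "cmod (cinner ?g f) = (norm f)^2 / A" unfolding ip norm_of_real using A0 by simp
  then show "numerical_radius (\<lambda>x. cinner x f *s ?g) = (norm f)^2 / A"
    using num_rank1_lower[of ?g f] num_rank1_upper[of f ?g] fg by linarith
qed

lemma low_frob: "cinner g f \<noteq> 0 \<Longrightarrow> cmod (cinner g f) \<le> frob_norm (\<lambda>x. cinner x f *s g)"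
  unfolding frob_rank1 using cinner_CS[of g f] by (simp add: mult.commute)
lemma up_frob: "h \<noteq> 0 \<Longrightarrow> frob_norm (\<lambda>x. cinner x h *s h) \<le> (norm h)^2"
  unfolding frob_rank1 by (simp add: power2_eq_square)
lemma low_spec: "cinner g f \<noteq> 0 \<Longrightarrow> cmod (cinner g f) \<le> spectral_radius (\<lambda>x. cinner x f *s g)"
  by (simp add: spec_rank1)
lemma up_spec: "(h::complex^'n) \<noteq> 0 \<Longrightarrow> spectral_radius (\<lambda>x. cinner x h *s h) \<le> (norm h)^2"
  by (subst spec_rank1) (auto simp: cinner_self norm_power)
lemma low_num: "cinner g f \<noteq> 0 \<Longrightarrow> cmod (cinner g f) \<le> numerical_radius (\<lambda>x. cinner x f *s g)"
  by (rule num_rank1_lower)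
lemma up_num: "h \<noteq> 0 \<Longrightarrow> numerical_radius (\<lambda>x. cinner x h *s h) \<le> (norm h)^2"
  using num_rank1_upper[of h h] by (simp add: power2_eq_square)

theorem theorem6p2:
  fixes F :: "nat \<Rightarrow> complex^'n::finite" and N :: nat
  assumes "CARD('n) \<le> N"
    and "is_tight_frame N F"
  shows "(optimal frob_norm N F (canonical_dual N F) \<longleftrightarrow>
           optimal spectral_radius N F (canonical_dual N F))
       \<and> (optimal spectral_radius N F (canonical_dual N F) \<longleftrightarrow>
           optimal numerical_radius N F (canonical_dual N F))"
proof -
  obtain A where A0: "0 < A" and A: "\<And>f. (\<Sum>i=1..N. (cmod (cinner f (F i)))\<^sup>2) = A * (norm f)\<^sup>2"
    using assms(2) unfolding is_tight_frame_def by blast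
  have E: "E_op {i} F (canonical_dual N F) = (\<lambda>x. cinner x (F i) *s (complex_of_real (1/A) *s F i))" for i
    unfolding E_op_single canonical_dual_tight[OF A A0] ..
  let ?V = "Max ((\<lambda>i. (norm (F i))^2 / A) ` {1..N})"
  have m1: "M1 frob_norm N F (canonical_dual N F) = ?V"
          "M1 spectral_radius N F (canonical_dual N F) = ?V"
          "M1 numerical_radius N F (canonical_dual N F) = ?V"
    unfolding M1_def E pair_vals[OF A0] by simp_all
  have i1: "Inf {M1 (frob_norm :: 'n measure_op) N F' G' | F' G'. is_dual N F' G'} = real CARD('n) / real N"
    by (rule Inf_val[OF assms(1) low_frob up_frob])
  have i2: "Inf {M1 (spectral_radius :: 'n measure_op) N F' G' | F' G'. is_dual N F' G'} = real CARD('n) / real N"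
    by (rule Inf_val[OF assms(1) low_spec up_spec])
  have i3: "Inf {M1 (numerical_radius :: 'n measure_op) N F' G' | F' G'. is_dual N F' G'} = real CARD('n) / real N"
    by (rule Inf_val[OF assms(1) low_num up_num])
  show ?thesis unfolding optimal_def m1 i1 i2 i3 by simp
qed


end
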